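(* Let $R\ge1$ and $\mathbf{x}$ a vector of pairwise distinct reals. Then $$\max_{1\le m\le R}\sum_{n=1}^R a_{m,n}^2\le\Vert A(\mathbf{x})\Vert^2\le 3\max_{1\le m\le R}\sum_{n=1}^R a_{m,n}^2.$$
   Context: $A(\mathbf{x})$ is the $R\times R$ matrix with entries $a_{m,m}=0$ and $a_{m,n}=\frac{1}{x_m-x_n}$ for $m\ne n$; $\Vert\cdot\Vert$ is the operator norm induced by the Euclidean norm. *)

theory Defs
  imports "HOL-Analysis.Analysis"
begin

text \<open>The R x R matrix A(x) with zero diagonal and entries 1/(x_m - x_n) off the diagonal;
  the dimension R is the cardinality of the finite index type 'n.\<close>
definition cauchyA :: "real^'n \<Rightarrow> real^'n^'n" where
  "cauchyA x = (\<chi> m n. if m = n then 0 else 1 / (x $ m - x $ n))"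

definition opnorm :: "real^'n^'m \<Rightarrow> real" where
  "opnorm M = onorm (\<lambda>v. M *v v)"

end

theory Submission
  imports Defs
begin

lemma C_lemma:
  fixes a :: "'n::finite \<Rightarrow> 'n \<Rightarrow> real"
  assumes anti: "\<And>m n. a n m = - a m n"
    and key: "\<forall>m n k. m \<noteq> n \<and> m \<noteq> k \<and> n \<noteq> k \<longrightarrow> a m n * a m k = a n k * (a m n - a m k)"
  shows "(\<Sum>m\<in>UNIV. a m n * a m k) = (if n = k then (\<Sum>m\<in>UNIV. (a n m)^2) else 0)
          + a n k * ((\<Sum>m\<in>UNIV. a k m) - (\<Sum>m\<in>UNIV. a n m)) + 2 * (a n k)^2"
proof -
  have z: "a m m = 0" for m using anti[of m m] by linarith
  show ?thesis
  proof (cases "n = k")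
    case True
    have "(\<Sum>m\<in>UNIV. a m n * a m k) = (\<Sum>m\<in>UNIV. (a n m)^2)"
      using True by (intro sum.cong refl) (metis anti minus_mult_minus power2_eq_square)
    then show ?thesis using True z by simp
  next
    case False
    have "(\<Sum>m\<in>UNIV. a m n * a m k) = (\<Sum>m\<in>UNIV. a n k * (a m n - a m k) + (if m = n \<or> m = k then (a n k)^2 else 0))"
    proof (intro sum.cong refl)
      fix m
      show "a m n * a m k = a n k * (a m n - a m k) + (if m = n \<or> m = k then (a n k)^2 else 0)"
      proof (cases "m = n \<or> m = k")
        case True
        then show ?thesis using z False by (auto simp: power2_eq_square anti[of k n])
      next
        case False': False
        then show ?thesis using key False by auto
      qed
    qed
    also have "\<dots> = (\<Sum>m\<in>UNIV. a n k * (a m n - a m k)) + (\<Sum>m\<in>UNIV. (if m = n \<or> m = k then (a n k)^2 else 0))"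
      by (rule sum.distrib)
    also have "(\<Sum>m\<in>UNIV. (if m = n \<or> m = k then (a n k)^2 else 0))
        = (\<Sum>m\<in>UNIV. (if m = n then (a n k)^2 else 0) + (if m = k then (a n k)^2 else 0))"
      by (intro sum.cong refl) (use False in auto)
    also have "\<dots> = 2 * (a n k)^2" by (simp only: sum.distrib sum.delta finite UNIV_I if_True)
    also have "(\<Sum>m\<in>UNIV. a n k * (a m n - a m k)) = a n k * ((\<Sum>m\<in>UNIV. a m n) - (\<Sum>m\<in>UNIV. a m k))"
      by (simp only: sum_distrib_left[symmetric] sum_subtractf)
    also have "(\<Sum>m\<in>UNIV. a m n) = - (\<Sum>m\<in>UNIV. a n m)" by (simp add: anti[of n] sum_negf)
    also have "(\<Sum>m\<in>UNIV. a m k) = - (\<Sum>m\<in>UNIV. a k m)" by (simp add: anti[of k] sum_negf)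
    finally show ?thesis using False by simp
  qed
qed


lemma swap3: "(\<Sum>m\<in>A. \<Sum>n\<in>B. \<Sum>k\<in>C. f m n k) = (\<Sum>n\<in>B. \<Sum>k\<in>C. \<Sum>m\<in>A. (f m n k :: real))"
proof -
  have "(\<Sum>m\<in>A. \<Sum>n\<in>B. \<Sum>k\<in>C. f m n k) = (\<Sum>n\<in>B. \<Sum>m\<in>A. \<Sum>k\<in>C. f m n k)" by (rule sum.swap)
  also have "\<dots> = (\<Sum>n\<in>B. \<Sum>k\<in>C. \<Sum>m\<in>A. f m n k)" by (rule sum.cong[OF refl]) (rule sum.swap)
  finally show ?thesis .
qed

lemma quad_lemma:
  fixes a :: "'n::finite \<Rightarrow> 'n \<Rightarrow> real" and p :: "'n \<Rightarrow> real"
  assumes anti: "\<And>m n. a n m = - a m n"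
    and key: "\<forall>m n k. m \<noteq> n \<and> m \<noteq> k \<and> n \<noteq> k \<longrightarrow> a m n * a m k = a n k * (a m n - a m k)"
  shows "(\<Sum>m\<in>UNIV. (\<Sum>n\<in>UNIV. a m n * p n)^2) =
     (\<Sum>n\<in>UNIV. (\<Sum>m\<in>UNIV. (a n m)^2) * (p n)^2)
   + (\<Sum>n\<in>UNIV. \<Sum>k\<in>UNIV. p n * p k * (a n k * ((\<Sum>m\<in>UNIV. a k m) - (\<Sum>m\<in>UNIV. a n m))))
   + 2 * (\<Sum>n\<in>UNIV. \<Sum>k\<in>UNIV. (a n k)^2 * p n * p k)"
proof -
  have "(\<Sum>m\<in>UNIV. (\<Sum>n\<in>UNIV. a m n * p n)^2) = (\<Sum>m\<in>UNIV. \<Sum>n\<in>UNIV. \<Sum>k\<in>UNIV. (a m n * p n) * (a m k * p k))"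
    by (simp add: power2_eq_square sum_product)
  also have "\<dots> = (\<Sum>n\<in>UNIV. \<Sum>k\<in>UNIV. \<Sum>m\<in>UNIV. (a m n * p n) * (a m k * p k))"
    by (rule swap3)
  also have "\<dots> = (\<Sum>n\<in>UNIV. \<Sum>k\<in>UNIV. p n * p k * (\<Sum>m\<in>UNIV. a m n * a m k))"
    by (intro sum.cong refl) (simp add: sum_distrib_left mult_ac)
  also have "\<dots> = (\<Sum>n\<in>UNIV. \<Sum>k\<in>UNIV. p n * p k * ((if n = k then (\<Sum>m\<in>UNIV. (a n m)^2) else 0)
          + a n k * ((\<Sum>m\<in>UNIV. a k m) - (\<Sum>m\<in>UNIV. a n m)) + 2 * (a n k)^2))"
    by (simp only: C_lemma[of a, OF anti key])
  also have "\<dots> = (\<Sum>n\<in>UNIV. \<Sum>k\<in>UNIV. p n * p k * (if n = k then (\<Sum>m\<in>UNIV. (a n m)^2) else 0))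
      + (\<Sum>n\<in>UNIV. \<Sum>k\<in>UNIV. p n * p k * (a n k * ((\<Sum>m\<in>UNIV. a k m) - (\<Sum>m\<in>UNIV. a n m))))
      + 2 * (\<Sum>n\<in>UNIV. \<Sum>k\<in>UNIV. (a n k)^2 * p n * p k)"
  proof -
    have "\<And>n k. p n * p k * ((if n = k then (\<Sum>m\<in>UNIV. (a n m)^2) else 0)
          + a n k * ((\<Sum>m\<in>UNIV. a k m) - (\<Sum>m\<in>UNIV. a n m)) + 2 * (a n k)^2)
        = p n * p k * (if n = k then (\<Sum>m\<in>UNIV. (a n m)^2) else 0)
          + p n * p k * (a n k * ((\<Sum>m\<in>UNIV. a k m) - (\<Sum>m\<in>UNIV. a n m))) + 2 * ((a n k)^2 * p n * p k)"
      by (simp only: distrib_left mult_ac)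
    then show ?thesis by (simp only: sum.distrib sum_distrib_left[symmetric])
  qed
  also have "(\<Sum>n\<in>UNIV. \<Sum>k\<in>UNIV. p n * p k * (if n = k then (\<Sum>m\<in>UNIV. (a n m)^2) else 0))
      = (\<Sum>n\<in>UNIV. (\<Sum>m\<in>UNIV. (a n m)^2) * (p n)^2)"
    by (intro sum.cong refl) (simp add: if_distrib power2_eq_square mult_ac cong: if_cong)
  finally show ?thesis .
qed

lemma mid_lemma:
  fixes a :: "'n::finite \<Rightarrow> 'n \<Rightarrow> real" and p :: "'n \<Rightarrow> real" and S :: "'n \<Rightarrow> real"
  assumes anti: "\<And>m n. a n m = - a m n"
  shows "(\<Sum>n\<in>UNIV. \<Sum>k\<in>UNIV. p n * p k * (a n k * (S k - S n)))
       = - 2 * (\<Sum>n\<in>UNIV. S n * p n * (\<Sum>k\<in>UNIV. a n k * p k))"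
proof -
  have "(\<Sum>n\<in>UNIV. \<Sum>k\<in>UNIV. p n * p k * a n k * S k) = (\<Sum>k\<in>UNIV. \<Sum>n\<in>UNIV. p n * p k * a n k * S k)"
    by (rule sum.swap)
  also have "\<dots> = - (\<Sum>k\<in>UNIV. \<Sum>n\<in>UNIV. p k * p n * a k n * S k)"
  proof (simp only: sum_negf[symmetric], intro sum.cong refl)
    fix k n
    show "p n * p k * a n k * S k = - (p k * p n * a k n * S k)" using anti[of k n] by simp
  qed
  finally have 1: "(\<Sum>n\<in>UNIV. \<Sum>k\<in>UNIV. p n * p k * a n k * S k) = - (\<Sum>k\<in>UNIV. \<Sum>n\<in>UNIV. p k * p n * a k n * S k)" .
  have "(\<Sum>n\<in>UNIV. \<Sum>k\<in>UNIV. p n * p k * (a n k * (S k - S n)))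
     = (\<Sum>n\<in>UNIV. \<Sum>k\<in>UNIV. p n * p k * a n k * S k) - (\<Sum>n\<in>UNIV. \<Sum>k\<in>UNIV. p n * p k * a n k * S n)"
    by (simp add: sum_subtractf[symmetric] algebra_simps)
  also have "\<dots> = - 2 * (\<Sum>n\<in>UNIV. \<Sum>k\<in>UNIV. p n * p k * a n k * S n)"
    unfolding 1 by simp
  also have "\<dots> = - 2 * (\<Sum>n\<in>UNIV. S n * p n * (\<Sum>k\<in>UNIV. a n k * p k))"
    by (simp add: sum_distrib_left mult_ac)
  finally show ?thesis .
qed

lemma Q_bound:
  fixes a :: "'n::finite \<Rightarrow> 'n \<Rightarrow> real" and p :: "'n \<Rightarrow> real"
  assumes anti: "\<And>m n. a n m = - a m n"
    and M: "\<And>n. (\<Sum>m\<in>UNIV. (a n m)^2) \<le> M"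
  shows "(\<Sum>n\<in>UNIV. (\<Sum>m\<in>UNIV. (a n m)^2) * (p n)^2) + 2 * (\<Sum>n\<in>UNIV. \<Sum>k\<in>UNIV. (a n k)^2 * p n * p k)
      \<le> 3 * M * (\<Sum>n\<in>UNIV. (p n)^2)"
proof -
  let ?T = "\<lambda>n. \<Sum>m\<in>UNIV. (a n m)^2"
  have 1: "(\<Sum>n\<in>UNIV. ?T n * (p n)^2) \<le> M * (\<Sum>n\<in>UNIV. (p n)^2)"
    unfolding sum_distrib_left by (intro sum_mono mult_right_mono M) auto
  have "2 * (\<Sum>n\<in>UNIV. \<Sum>k\<in>UNIV. (a n k)^2 * p n * p k)
      \<le> (\<Sum>n\<in>UNIV. \<Sum>k\<in>UNIV. (a n k)^2 * (p n)^2) + (\<Sum>n\<in>UNIV. \<Sum>k\<in>UNIV. (a n k)^2 * (p k)^2)"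
  proof -
    have "\<And>n k. 2 * ((a n k)^2 * p n * p k) \<le> (a n k)^2 * (p n)^2 + (a n k)^2 * (p k)^2"
    proof -
      fix n k
      have "2 * (p n * p k) \<le> (p n)^2 + (p k)^2" using sum_squares_bound[of "p n" "p k"] by simp
      then have "(a n k)^2 * (2 * (p n * p k)) \<le> (a n k)^2 * ((p n)^2 + (p k)^2)"
        by (intro mult_left_mono) auto
      then show "2 * ((a n k)^2 * p n * p k) \<le> (a n k)^2 * (p n)^2 + (a n k)^2 * (p k)^2"
        by (simp add: algebra_simps)
    qed
    then have "(\<Sum>n\<in>UNIV. \<Sum>k\<in>UNIV. 2 * ((a n k)^2 * p n * p k))
       \<le> (\<Sum>n\<in>UNIV. \<Sum>k\<in>UNIV. (a n k)^2 * (p n)^2 + (a n k)^2 * (p k)^2)"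
      by (intro sum_mono) auto
    then show ?thesis by (simp add: sum_distrib_left sum.distrib)
  qed
  also have "(\<Sum>n\<in>UNIV. \<Sum>k\<in>UNIV. (a n k)^2 * (p n)^2) = (\<Sum>n\<in>UNIV. ?T n * (p n)^2)"
    by (simp add: sum_distrib_right)
  also have "(\<Sum>n\<in>UNIV. \<Sum>k\<in>UNIV. (a n k)^2 * (p k)^2) = (\<Sum>k\<in>UNIV. \<Sum>n\<in>UNIV. (a n k)^2 * (p k)^2)"
    by (rule sum.swap)
  also have "\<dots> = (\<Sum>k\<in>UNIV. ?T k * (p k)^2)"
  proof (intro sum.cong refl)
    fix k
    have "(\<Sum>n\<in>UNIV. (a n k)^2) = ?T k" by (intro sum.cong refl) (simp add: anti[of k])
    then show "(\<Sum>n\<in>UNIV. (a n k)^2 * (p k)^2) = ?T k * (p k)^2" by (simp add: sum_distrib_right[symmetric])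
  qed
  finally show ?thesis using 1 by linarith
qed


lemma norm_sq_vec: "(norm (v::real^'n))^2 = (\<Sum>i\<in>UNIV. (v$i)^2)"
proof -
  have "(norm v)^2 = v \<bullet> v" by (rule power2_norm_eq_inner)
  also have "\<dots> = (\<Sum>i\<in>UNIV. (v$i)^2)" unfolding inner_vec_def by (simp add: power2_eq_square)
  finally show ?thesis .
qed

lemma inner_vec_real: "(v::real^'n) \<bullet> w = (\<Sum>i\<in>UNIV. v$i * w$i)"
  by (simp add: inner_vec_def)

lemma mv_coord: "((M::real^'n^'m) *v v) $ i = (\<Sum>j\<in>UNIV. M$i$j * v$j)"
  by (simp add: matrix_vector_mult_def)

lemma antisym_inner:
  fixes a :: "'n::finite \<Rightarrow> 'n \<Rightarrow> real"
  assumes anti: "\<And>m n. a n m = - a m n"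
  shows "(\<Sum>i\<in>UNIV. (\<Sum>j\<in>UNIV. a i j * v j) * u i) = - (\<Sum>j\<in>UNIV. v j * (\<Sum>i\<in>UNIV. a j i * u i))"
proof -
  have "(\<Sum>i\<in>UNIV. (\<Sum>j\<in>UNIV. a i j * v j) * u i) = (\<Sum>i\<in>UNIV. \<Sum>j\<in>UNIV. a i j * v j * u i)"
    by (simp add: sum_distrib_right)
  also have "\<dots> = (\<Sum>j\<in>UNIV. \<Sum>i\<in>UNIV. a i j * v j * u i)" by (rule sum.swap)
  also have "\<dots> = - (\<Sum>j\<in>UNIV. \<Sum>i\<in>UNIV. v j * (a j i * u i))"
  proof (simp only: sum_negf[symmetric], intro sum.cong refl)
    fix j i
    show "a i j * v j * u i = - (v j * (a j i * u i))" using anti[of i j] by simp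
  qed
  finally show ?thesis by (simp add: sum_distrib_left)
qed

lemma key_alg:
  fixes d1 d2 :: real
  assumes "d1 \<noteq> 0" "d2 \<noteq> 0" "d2 - d1 \<noteq> 0"
  shows "1 / d1 * (1 / d2) = 1 / (d2 - d1) * (1 / d1 - 1 / d2)"
  using assms by (simp add: field_simps)

theorem corollary2:
  fixes x :: "real^'n"
  assumes "inj (\<lambda>i. x $ i)"
  shows "(MAX m\<in>UNIV. \<Sum>n\<in>UNIV. (cauchyA x $ m $ n)^2) \<le> (opnorm (cauchyA x))^2
       \<and> (opnorm (cauchyA x))^2 \<le> 3 * (MAX m\<in>UNIV. \<Sum>n\<in>UNIV. (cauchyA x $ m $ n)^2)"
proof -
  define A where "A = cauchyA x"
  define a where "a m n = A $ m $ n" for m n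
  define T where "T m = (\<Sum>n\<in>UNIV. (a m n)^2)" for m
  define M where "M = (MAX m\<in>UNIV. T m)"
  define N where "N = opnorm A"
  have xd: "x $ m - x $ n \<noteq> 0" if "m \<noteq> n" for m n
    using assms that by (auto dest: injD)
  have aval: "a m n = (if m = n then 0 else 1 / (x $ m - x $ n))" for m n
    by (simp add: a_def A_def cauchyA_def)
  have anti: "a n m = - a m n" for m n
  proof (cases "m = n")
    case False
    then show ?thesis using xd[OF False] xd[of n m] False
      by (simp add: aval) (simp add: field_simps)
  qed (simp add: aval)
  have key: "a m n * a m k = a n k * (a m n - a m k)" if "m \<noteq> n" "m \<noteq> k" "n \<noteq> k" for m n k
  proof -
    have "x $ m - x $ k - (x $ m - x $ n) \<noteq> 0" using xd[of n k] that by simp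
    then have "1 / (x $ m - x $ n) * (1 / (x $ m - x $ k)) = 1 / (x $ m - x $ k - (x $ m - x $ n)) * (1 / (x $ m - x $ n) - 1 / (x $ m - x $ k))"
      using that xd[of m n] xd[of m k] by (intro key_alg) auto
    moreover have "x $ m - x $ k - (x $ m - x $ n) = x $ n - x $ k" by simp
    ultimately show ?thesis using that by (simp only: aval if_False)
  qed
  have key2: "\<forall>m n k. m \<noteq> n \<and> m \<noteq> k \<and> n \<noteq> k \<longrightarrow> a m n * a m k = a n k * (a m n - a m k)"
    using key by blast
  have Tle: "T m \<le> M" for m unfolding M_def by (rule Max_ge) auto
  have T0: "0 \<le> T m" for m unfolding T_def by (intro sum_nonneg) auto
  have M0: "0 \<le> M" using Tle[of undefined] T0[of undefined] by linarith
  have Av: "(A *v v) $ i = (\<Sum>j\<in>UNIV. a i j * v $ j)" for v i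
    by (simp add: mv_coord a_def)
  have bl: "bounded_linear (\<lambda>v. A *v v)" by simp
  have N0: "0 \<le> N" unfolding N_def opnorm_def using onorm_pos_le[OF bl] .
  have low: "M \<le> N^2"
  proof -
    have "T m \<le> N^2" for m
    proof -
      have "(A *v axis m 1) $ i = a i m" for i
        by (simp add: Av axis_def if_distrib cong: if_cong)
      then have "(norm (A *v axis m 1))^2 = (\<Sum>i\<in>UNIV. (a i m)^2)" by (simp add: norm_sq_vec)
      also have "\<dots> = T m" unfolding T_def by (intro sum.cong refl) (simp add: anti[of _ m])
      finally have e: "(norm (A *v axis m 1))^2 = T m" .
      have "norm (A *v axis m 1) \<le> N" using onorm[OF bl, of "axis m 1"] by (simp add: N_def opnorm_def)
      then have "(norm (A *v axis m 1))^2 \<le> N^2" by (intro power_mono) auto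
      then show ?thesis using e by simp
    qed
    then show ?thesis unfolding M_def by (intro Max.boundedI) auto
  qed
  obtain v :: "real^'n" where v1: "norm v = 1" and vmax: "\<And>y. norm y = 1 \<Longrightarrow> norm (A *v y) \<le> norm (A *v v)"
  proof -
    have "sphere (0::real^'n) 1 \<noteq> {}" using norm_axis_1[of undefined] by (metis mem_sphere_0 empty_iff)
    moreover have "continuous_on (sphere (0::real^'n) 1) (\<lambda>y. norm (A *v y))"
      by (intro continuous_on_norm linear_continuous_on bl)
    ultimately have "\<exists>v\<in>sphere (0::real^'n) 1. \<forall>y\<in>sphere 0 1. norm (A *v y) \<le> norm (A *v v)"
      by (intro continuous_attains_sup compact_sphere)
    then show ?thesis using that by auto
  qed
  define s where "s = norm (A *v v)"
  have bound: "norm (A *v y) \<le> s * norm y" for y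
  proof (cases "y = 0")
    case False
    have "norm (A *v ((1 / norm y) *\<^sub>R y)) \<le> s" unfolding s_def using False by (intro vmax) simp
    then show ?thesis using False by (simp add: matrix_vector_mult_scaleR field_simps)
  qed simp
  have Ns: "N \<le> s" unfolding N_def opnorm_def by (rule onorm_le) (rule bound)
  have s0: "0 \<le> s" unfolding s_def by simp
  have ss: "s^2 \<le> 3 * M"
  proof (cases "s = 0")
    case True then show ?thesis using M0 by simp
  next
    case False
    then have spos: "0 < s" using s0 by simp
    define w where "w = A *v v"
    define z where "z = - (A *v w)"
    have nw: "norm w = s" unfolding w_def s_def ..
    have nz: "norm z \<le> s^2" unfolding z_def using bound[of w] nw by (simp add: power2_eq_square)
    have "v \<bullet> z = - (v \<bullet> (A *v w))" unfolding z_def by simp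
    also have "v \<bullet> (A *v w) = - (w \<bullet> w)"
    proof -
      have "w \<bullet> w = (\<Sum>i\<in>UNIV. (\<Sum>j\<in>UNIV. a i j * v $ j) * w $ i)"
        unfolding inner_vec_real by (intro sum.cong refl) (simp add: w_def Av)
      also have "\<dots> = - (\<Sum>j\<in>UNIV. v $ j * (\<Sum>i\<in>UNIV. a j i * w $ i))"
        by (rule antisym_inner[of a, OF anti])
      also have "\<dots> = - (v \<bullet> (A *v w))" by (simp add: inner_vec_real Av)
      finally show ?thesis by simp
    qed
    finally have "v \<bullet> z = w \<bullet> w" by simp
    also have "w \<bullet> w = s^2" using nw by (metis power2_norm_eq_inner)
    finally have vz: "v \<bullet> z = s^2" .
    have "v \<bullet> z \<le> norm v * norm z" by (rule norm_cauchy_schwarz)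
    then have nz2: "norm z = s^2" using vz nz v1 by simp
    have "v \<bullet> z = norm v * norm z" using vz nz2 v1 by simp
    then have "norm v *\<^sub>R z = norm z *\<^sub>R v" by (simp only: norm_cauchy_schwarz_eq)
    then have zv: "z = s^2 *\<^sub>R v" using v1 nz2 by simp
    define q where "q = - (1 / s) *\<^sub>R w"
    have Ap: "A *v v = - s *\<^sub>R q" unfolding q_def w_def using spos by simp
    have Aq: "A *v q = s *\<^sub>R v"
    proof -
      have "A *v q = (- (1 / s)) *\<^sub>R (A *v w)" unfolding q_def
        by (rule matrix_vector_mult_scaleR)
      also have "\<dots> = (1 / s) *\<^sub>R z" unfolding z_def by simp
      finally have "A *v q = (1 / s) *\<^sub>R z" .
      then show ?thesis using zv spos by (simp add: power2_eq_square)
    qed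
    have nq: "norm q = 1" unfolding q_def using nw spos by simp
    have nAq: "norm (A *v q) = s" unfolding Aq using v1 s0 by simp
    have Apc: "(A *v v) $ n = - s * q $ n" for n unfolding Ap by simp
    have Aqc: "(A *v q) $ n = s * v $ n" for n unfolding Aq by simp
    define S where "S n = (\<Sum>m\<in>UNIV. a n m)" for n
    define Q where "Q p = (\<Sum>n\<in>UNIV. T n * (p n)^2) + 2 * (\<Sum>n\<in>UNIV. \<Sum>k\<in>UNIV. (a n k)^2 * p n * p k)" for p :: "'n \<Rightarrow> real"
    have ident: "(norm (A *v u))^2 = Q (\<lambda>i. u $ i) - 2 * (\<Sum>n\<in>UNIV. S n * u $ n * (A *v u) $ n)" for u
    proof -
      have "(norm (A *v u))^2 = (\<Sum>m\<in>UNIV. (\<Sum>n\<in>UNIV. a m n * u $ n)^2)"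
        by (simp only: norm_sq_vec Av)
      also have "\<dots> = Q (\<lambda>i. u $ i) + (\<Sum>n\<in>UNIV. \<Sum>k\<in>UNIV. u $ n * u $ k * (a n k * (S k - S n)))"
        unfolding quad_lemma[of a, OF anti key2] Q_def T_def S_def by simp
      also have "(\<Sum>n\<in>UNIV. \<Sum>k\<in>UNIV. u $ n * u $ k * (a n k * (S k - S n)))
          = - 2 * (\<Sum>n\<in>UNIV. S n * u $ n * (\<Sum>k\<in>UNIV. a n k * u $ k))"
        by (rule mid_lemma[of a, OF anti])
      finally show ?thesis by (simp only: Av)
    qed
    have Qb: "Q (\<lambda>i. u $ i) \<le> 3 * M" if "norm u = 1" for u
    proof -
      have "Q (\<lambda>i. u $ i) \<le> 3 * M * (\<Sum>n\<in>UNIV. (u $ n)^2)"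
        unfolding Q_def T_def by (rule Q_bound[of a, OF anti]) (use Tle in \<open>simp add: T_def\<close>)
      also have "(\<Sum>n\<in>UNIV. (u $ n)^2) = 1" using that norm_sq_vec[of u] by simp
      finally show ?thesis by simp
    qed
    have e1: "s^2 = Q (\<lambda>i. v $ i) - 2 * (\<Sum>n\<in>UNIV. S n * v $ n * (- s * q $ n))"
      using ident[of v] unfolding Apc s_def by simp
    have e2: "s^2 = Q (\<lambda>i. q $ i) - 2 * (\<Sum>n\<in>UNIV. S n * q $ n * (s * v $ n))"
      using ident[of q] unfolding Aqc nAq by simp
    have canc: "(\<Sum>n\<in>UNIV. S n * v $ n * (- s * q $ n)) = - (\<Sum>n\<in>UNIV. S n * q $ n * (s * v $ n))"
      by (simp only: sum_negf[symmetric]) (intro sum.cong refl, simp add: mult_ac)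
    have "2 * s^2 \<le> 3 * M + 3 * M"
      using e1 e2 canc Qb[OF v1] Qb[OF nq] by linarith
    then show ?thesis by simp
  qed
  have "N^2 \<le> s^2" using Ns N0 by (intro power_mono) auto
  then have "N^2 \<le> 3 * M" using ss by linarith
  then show ?thesis using low unfolding M_def T_def N_def a_def A_def by simp
qed

end
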